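(* Let $A\subseteq\mathbb{Z}^n$ be finite with $\operatorname{conv}(A)$ of dimension $n$, and let $C_1,\dots,C_k\subseteq[r]$ be the primitive collections of rays of $\Sigma_A$. If $C_1\cup\dots\cup C_k=[r]$, then the preprime $T=\mathbb{R}_{\ge0}[x_1,\dots,x_r]+\langle1-\sum_{i\in C_j}x_i : j\in[k]\rangle\subseteq\mathbb{R}[x_1,\dots,x_r]$ is Archimedean. If moreover $f\in\mathbb{R}[t^{\pm1}]_A$ is strictly $A$-copositive, then there exist $g\in\mathbb{R}_{\ge0}[x_1,\dots,x_r]$ and $g_1,\dots,g_k\in\mathbb{R}[x_1,\dots,x_r]$ with $f_{\mathrm{cox}}=g+\sum_{j=1}^kg_j\big(1-\sum_{i\in C_j}x_i\big)$.
   Context: Cox setup: $\Sigma_A$ inner normal fan of $\operatorname{conv}(A)$ with rays $1,\dots,r$, primitive generators $F_i$ (columns of $F$), $b$ with $\operatorname{conv}(A)=\{a:F^\top a+b\ge0\}$, $f_{\mathrm{cox}}=\sum_ac_ax^{F^\top a+b}$. A primitive collection is a set $C\subseteq[r]$ whose rays do not span a cone of $\Sigma_A$ but every proper subset does. $\mathbb{R}_{\ge0}[x]$ denotes polynomials with nonnegative coefficients. A preprime is a subset closed under addition and multiplication containing $\mathbb{Q}_{\ge0}$; it is Archimedean if for every $h$ there is $N\in\mathbb{N}_{>0}$ with $N\pm h$ in it. Strict $A$-copositivity of $f$ means $f$ lies in the interior of the cone of $g\in\mathbb{R}[t^{\pm1}]_A$ with $g\ge0$ on $\mathbb{R}^n_{>0}$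 (equivalently $\sum_jc_{a_j}y_j>0$ on $Y_{\hat A}\cap\mathbb{R}^m_{\ge0}\setminus\{0\}$, $Y_{\hat A}$ the affine toric variety of $A$). *)

theory Defs
  imports "HOL-Analysis.Analysis" "HOL-Library.Poly_Mapping"
begin

type_synonym rpoly = "(nat \<Rightarrow>\<^sub>0 nat) \<Rightarrow>\<^sub>0 real"

definition pvar :: "nat \<Rightarrow> rpoly" where
  "pvar i = Poly_Mapping.single (Poly_Mapping.single i 1) 1"

definition in_poly_ring :: "nat \<Rightarrow> rpoly \<Rightarrow> bool" where
  "in_poly_ring r p \<longleftrightarrow> (\<forall>m\<in>Poly_Mapping.keys p. Poly_Mapping.keys m \<subseteq> {1..r})"

definition nonneg_coeffs :: "rpoly \<Rightarrow> bool" where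
  "nonneg_coeffs g \<longleftrightarrow> (\<forall>m. Poly_Mapping.lookup g m \<ge> 0)"

definition preprime :: "rpoly set \<Rightarrow> bool" where
  "preprime T \<longleftrightarrow> (\<forall>p\<in>T. \<forall>q\<in>T. p + q \<in> T \<and> p * q \<in> T)
                  \<and> (\<forall>q::rat. q \<ge> 0 \<longrightarrow> Poly_Mapping.single 0 (of_rat q) \<in> T)"

definition archimedean :: "nat \<Rightarrow> rpoly set \<Rightarrow> bool" where
  "archimedean r T \<longleftrightarrow> (\<forall>h. in_poly_ring r h \<longrightarrow> (\<exists>N::nat. N > 0 \<and> of_nat N + h \<in> T \<and> of_nat N - h \<in> T))"

definition rvec :: "int ^ 'n \<Rightarrow> real ^ 'n" where
  "rvec v = (\<chi> j. real_of_int (v $ j))"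

definition idot :: "int ^ 'n \<Rightarrow> int ^ 'n \<Rightarrow> int" where
  "idot u v = (\<Sum>j\<in>UNIV. u $ j * v $ j)"

definition primitive_vec :: "int ^ 'n \<Rightarrow> bool" where
  "primitive_vec u \<longleftrightarrow> Gcd (range (\<lambda>j. u $ j)) = 1"

text \<open>Primitive inner facet normals of a polytope P: the rays of its inner normal fan.\<close>
definition ray_generators :: "(real ^ 'n) set \<Rightarrow> (int ^ 'n) set" where
  "ray_generators P = {u. primitive_vec u \<and>
      {x \<in> P. rvec u \<bullet> x = (INF y\<in>P. rvec u \<bullet> y)} facet_of P}"

definition normal_fan :: "(real ^ 'n) set \<Rightarrow> (real ^ 'n) set set" where
  "normal_fan P = {{u. \<forall>x\<in>Fc. \<forall>y\<in>P. u \<bullet> x \<le> u \<bullet> y} | Fc. Fc face_of P \<and> Fc \<noteq> {}}"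

definition rays_in_cone :: "(real ^ 'n) set \<Rightarrow> (nat \<Rightarrow> int ^ 'n) \<Rightarrow> nat set \<Rightarrow> bool" where
  "rays_in_cone P F S \<longleftrightarrow> (\<exists>\<sigma>\<in>normal_fan P. \<forall>i\<in>S. rvec (F i) \<in> \<sigma>)"

definition primitive_collection ::
  "(real ^ 'n) set \<Rightarrow> nat \<Rightarrow> (nat \<Rightarrow> int ^ 'n) \<Rightarrow> nat set \<Rightarrow> bool" where
  "primitive_collection P r F C \<longleftrightarrow> C \<subseteq> {1..r} \<and> \<not> rays_in_cone P F C
      \<and> (\<forall>C'. C' \<subset> C \<longrightarrow> rays_in_cone P F C')"

text \<open>Offsets b_i, so that conv(A) = {a. F^T a + b \<ge> 0}.\<close>
definition offset :: "(int ^ 'n) set \<Rightarrow> (nat \<Rightarrow> int ^ 'n) \<Rightarrow> nat \<Rightarrow> int" where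
  "offset A F i = - Min ((\<lambda>a. idot (F i) a) ` A)"

definition cox_poly ::
  "(int ^ 'n) set \<Rightarrow> nat \<Rightarrow> (nat \<Rightarrow> int ^ 'n) \<Rightarrow> (int ^ 'n \<Rightarrow> real) \<Rightarrow> rpoly" where
  "cox_poly A r F c = (\<Sum>a\<in>A. Poly_Mapping.single
      (\<Sum>i\<in>{1..r}. Poly_Mapping.single i (nat (idot (F i) a + offset A F i))) (c a))"

definition laurent_eval :: "(int ^ 'n) set \<Rightarrow> (int ^ 'n \<Rightarrow> real) \<Rightarrow> real ^ 'n \<Rightarrow> real" where
  "laurent_eval A c t = (\<Sum>a\<in>A. c a * (\<Prod>j\<in>UNIV. (t $ j) powi (a $ j)))"

text \<open>Strict A-copositivity: the coefficient vector lies in the interior (in R^A) of the cone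
  of coefficient vectors whose Laurent polynomial is nonnegative on the positive orthant.\<close>
definition strictly_A_copositive :: "(int ^ 'n) set \<Rightarrow> (int ^ 'n \<Rightarrow> real) \<Rightarrow> bool" where
  "strictly_A_copositive A c \<longleftrightarrow> (\<exists>\<epsilon>>0. \<forall>d. (\<forall>a\<in>A. \<bar>d a - c a\<bar> < \<epsilon>) \<longrightarrow>
      (\<forall>t. (\<forall>j. t $ j > 0) \<longrightarrow> laurent_eval A d t \<ge> 0))"

end

theory Submission
  imports Defs
begin

definition cst :: "real \<Rightarrow> rpoly" where "cst c = Poly_Mapping.single 0 c"

lemma cst_add: "cst (a + b) = cst a + cst b" by (simp add: cst_def single_add)
lemma cst_mult: "cst (a * b) = cst a * cst b" by (simp add: cst_def mult_single)
lemma cst_one[simp]: "cst 1 = 1" by (simp add: cst_def)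
lemma cst_zero[simp]: "cst 0 = 0" by (simp add: cst_def)
lemma cst_uminus: "cst (- a) = - cst a" by (simp add: cst_def single_uminus)
lemma cst_diff: "cst (a - b) = cst a - cst b" by (simp add: cst_def single_diff)
lemma of_nat_cst: "(of_nat n :: rpoly) = cst (of_nat n)" by (simp add: cst_def)

lemma pm_expand_superset:
  fixes p :: "'a \<Rightarrow>\<^sub>0 'b::comm_monoid_add"
  assumes "finite S" "Poly_Mapping.keys p \<subseteq> S"
  shows "p = (\<Sum>m\<in>S. Poly_Mapping.single m (Poly_Mapping.lookup p m))"
proof (rule poly_mapping_eqI)
  fix k
  have "(\<Sum>m\<in>S. Poly_Mapping.lookup (Poly_Mapping.single m (Poly_Mapping.lookup p m)) k)
      = (\<Sum>m\<in>S. if m = k then Poly_Mapping.lookup p m else 0)"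
    by (rule sum.cong) (auto simp: lookup_single)
  also have "\<dots> = Poly_Mapping.lookup p k"
    using assms by (auto simp: sum.delta in_keys_iff)
  finally show "Poly_Mapping.lookup p k = Poly_Mapping.lookup (\<Sum>m\<in>S. Poly_Mapping.single m (Poly_Mapping.lookup p m)) k"
    by (simp add: lookup_sum)
qed

lemma pm_expand:
  fixes p :: "'a \<Rightarrow>\<^sub>0 'b::comm_monoid_add"
  shows "p = (\<Sum>m\<in>Poly_Mapping.keys p. Poly_Mapping.single m (Poly_Mapping.lookup p m))"
  by (rule pm_expand_superset) auto

lemma pvar_power: "pvar i ^ k = Poly_Mapping.single (Poly_Mapping.single i k) 1"
  by (induction k) (auto simp: pvar_def mult_single single_add[symmetric] add.commute)

lemma prod_singles:
  "finite I \<Longrightarrow> (\<Prod>i\<in>I. Poly_Mapping.single (g i) (1::real)) = Poly_Mapping.single (\<Sum>i\<in>I. g i) 1"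
  by (induction I rule: finite_induct) (auto simp: mult_single)

lemma monomial_eq:
  assumes "finite I" "Poly_Mapping.keys m \<subseteq> I"
  shows "(\<Prod>i\<in>I. pvar i ^ Poly_Mapping.lookup m i) = Poly_Mapping.single m 1"
proof -
  have "(\<Prod>i\<in>I. pvar i ^ Poly_Mapping.lookup m i) = Poly_Mapping.single (\<Sum>i\<in>I. Poly_Mapping.single i (Poly_Mapping.lookup m i)) 1"
    by (simp add: pvar_power prod_singles assms)
  also have "(\<Sum>i\<in>I. Poly_Mapping.single i (Poly_Mapping.lookup m i)) = m"
    using pm_expand_superset[OF assms] by simp
  finally show ?thesis .
qed

lemma single_cst: "Poly_Mapping.single m c = cst c * Poly_Mapping.single m 1"
  by (simp add: cst_def mult_single)

definition mon :: "(nat \<Rightarrow> real) \<Rightarrow> (nat \<Rightarrow>\<^sub>0 nat) \<Rightarrow> real" where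
  "mon x m = (\<Prod>i\<in>Poly_Mapping.keys m. x i ^ Poly_Mapping.lookup m i)"

definition ev :: "(nat \<Rightarrow> real) \<Rightarrow> rpoly \<Rightarrow> real" where
  "ev x p = (\<Sum>m\<in>Poly_Mapping.keys p. Poly_Mapping.lookup p m * mon x m)"

lemma mon_superset:
  assumes "finite S" "Poly_Mapping.keys m \<subseteq> S"
  shows "mon x m = (\<Prod>i\<in>S. x i ^ Poly_Mapping.lookup m i)"
  unfolding mon_def
  by (rule prod.mono_neutral_left) (use assms in \<open>auto simp: in_keys_iff\<close>)

lemma ev_superset:
  assumes "finite S" "Poly_Mapping.keys p \<subseteq> S"
  shows "ev x p = (\<Sum>m\<in>S. Poly_Mapping.lookup p m * mon x m)"
  unfolding ev_def
  by (rule sum.mono_neutral_left) (use assms in \<open>auto simp: in_keys_iff\<close>)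

lemma keys_add_sub: "Poly_Mapping.keys (p + q) \<subseteq> Poly_Mapping.keys p \<union> Poly_Mapping.keys q"
  by (auto simp: in_keys_iff lookup_add)

lemma ev_add: "ev x (p + q) = ev x p + ev x q"
proof -
  let ?S = "Poly_Mapping.keys p \<union> Poly_Mapping.keys q"
  have "ev x (p + q) = (\<Sum>m\<in>?S. Poly_Mapping.lookup (p+q) m * mon x m)"
    by (rule ev_superset) (auto simp: in_keys_iff lookup_add)
  also have "\<dots> = (\<Sum>m\<in>?S. Poly_Mapping.lookup p m * mon x m) + (\<Sum>m\<in>?S. Poly_Mapping.lookup q m * mon x m)"
    by (simp add: lookup_add distrib_right sum.distrib)
  also have "\<dots> = ev x p + ev x q"
    by (subst (1 2) ev_superset[of ?S]) auto
  finally show ?thesis .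
qed

lemma ev_zero[simp]: "ev x 0 = 0" by (simp add: ev_def)

lemma ev_sum: "ev x (sum f I) = (\<Sum>i\<in>I. ev x (f i))"
  by (induction I rule: infinite_finite_induct) (auto simp: ev_add)

lemma ev_single: "ev x (Poly_Mapping.single m c) = c * mon x m"
  by (simp add: ev_def)

lemma mon_add: "mon x (m + m') = mon x m * mon x m'"
proof -
  let ?S = "Poly_Mapping.keys m \<union> Poly_Mapping.keys m'"
  have "mon x (m + m') = (\<Prod>i\<in>?S. x i ^ Poly_Mapping.lookup (m+m') i)"
    by (rule mon_superset) (auto simp: in_keys_iff lookup_add)
  also have "\<dots> = (\<Prod>i\<in>?S. x i ^ Poly_Mapping.lookup m i) * (\<Prod>i\<in>?S. x i ^ Poly_Mapping.lookup m' i)"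
    by (simp add: lookup_add power_add prod.distrib)
  also have "\<dots> = mon x m * mon x m'"
    by (subst (1 2) mon_superset[of ?S]) auto
  finally show ?thesis .
qed

lemma mon_zero[simp]: "mon x 0 = 1" by (simp add: mon_def)

lemma ev_mult: "ev x (p * q) = ev x p * ev x q"
proof -
  have "p * q = (\<Sum>m\<in>Poly_Mapping.keys p. Poly_Mapping.single m (Poly_Mapping.lookup p m)) *
                (\<Sum>m\<in>Poly_Mapping.keys q. Poly_Mapping.single m (Poly_Mapping.lookup q m))"
    by (subst (1) pm_expand[of p], subst (1) pm_expand[of q]) (rule refl)
  also have "\<dots> = (\<Sum>m\<in>Poly_Mapping.keys p. \<Sum>m'\<in>Poly_Mapping.keys q.
       Poly_Mapping.single (m + m') (Poly_Mapping.lookup p m * Poly_Mapping.lookup q m'))"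
    by (simp add: sum_product mult_single)
  finally have "ev x (p * q) = (\<Sum>m\<in>Poly_Mapping.keys p. \<Sum>m'\<in>Poly_Mapping.keys q.
       (Poly_Mapping.lookup p m * mon x m) * (Poly_Mapping.lookup q m' * mon x m'))"
    by (simp add: ev_sum ev_single mon_add mult_ac)
  also have "\<dots> = ev x p * ev x q"
    by (simp add: ev_def sum_product)
  finally show ?thesis .
qed

lemma ev_cst[simp]: "ev x (cst c) = c" by (simp add: cst_def ev_single)
lemma ev_one[simp]: "ev x 1 = 1" using ev_cst[of x 1] by simp
lemma ev_uminus: "ev x (- p) = - ev x p"
  by (simp add: ev_def keys_def sum_negf[symmetric])
lemma ev_diff: "ev x (p - q) = ev x p - ev x q"
  using ev_add[of x p "-q"] by (simp add: ev_uminus)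
lemma ev_pvar[simp]: "ev x (pvar i) = x i"
  by (simp add: pvar_def ev_single mon_def)
lemma ev_prod: "ev x (prod f I) = (\<Prod>i\<in>I. ev x (f i))"
  by (induction I rule: infinite_finite_induct) (auto simp: ev_mult)
lemma ev_power: "ev x (p ^ k) = ev x p ^ k"
  by (induction k) (auto simp: ev_mult)

lemma ipr_add: "in_poly_ring r p \<Longrightarrow> in_poly_ring r q \<Longrightarrow> in_poly_ring r (p + q)"
proof -
  assume H: "in_poly_ring r p" "in_poly_ring r q"
  show ?thesis unfolding in_poly_ring_def
  proof
    fix m assume "m \<in> Poly_Mapping.keys (p + q)"
    then have "m \<in> Poly_Mapping.keys p \<union> Poly_Mapping.keys q" by (rule subsetD[OF keys_add_sub])
    then show "Poly_Mapping.keys m \<subseteq> {1..r}" using H unfolding in_poly_ring_def by blast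
  qed
qed

lemma ipr_mult: "in_poly_ring r p \<Longrightarrow> in_poly_ring r q \<Longrightarrow> in_poly_ring r (p * q)"
  unfolding in_poly_ring_def
proof
  fix m assume H: "\<forall>m\<in>Poly_Mapping.keys p. Poly_Mapping.keys m \<subseteq> {1..r}"
    "\<forall>m\<in>Poly_Mapping.keys q. Poly_Mapping.keys m \<subseteq> {1..r}" and m: "m \<in> Poly_Mapping.keys (p*q)"
  then obtain a b where "m = a + b" "a \<in> Poly_Mapping.keys p" "b \<in> Poly_Mapping.keys q"
    using keys_mult by blast
  moreover have "Poly_Mapping.keys (a + b) \<subseteq> Poly_Mapping.keys a \<union> Poly_Mapping.keys b" by (rule keys_add_sub)
  ultimately show "Poly_Mapping.keys m \<subseteq> {1..r}" using H by blast
qed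

lemma ipr_uminus: "in_poly_ring r p \<Longrightarrow> in_poly_ring r (- p)"
  unfolding in_poly_ring_def by (simp add: keys_def)

lemma ipr_diff: "in_poly_ring r p \<Longrightarrow> in_poly_ring r q \<Longrightarrow> in_poly_ring r (p - q)"
  using ipr_add[of r p "-q"] ipr_uminus[of r q] by simp

lemma ipr_cst: "in_poly_ring r (cst c)"
  unfolding in_poly_ring_def cst_def by auto

lemma ipr_zero: "in_poly_ring r 0" using ipr_cst[of r 0] by simp
lemma ipr_one: "in_poly_ring r 1" using ipr_cst[of r 1] by simp

lemma ipr_pvar: "i \<in> {1..r} \<Longrightarrow> in_poly_ring r (pvar i)"
  unfolding in_poly_ring_def pvar_def by auto

lemma ipr_sum: "(\<And>i. i \<in> I \<Longrightarrow> in_poly_ring r (f i)) \<Longrightarrow> in_poly_ring r (sum f I)"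
  by (induction I rule: infinite_finite_induct) (auto intro: ipr_add ipr_zero)

lemma ipr_prod: "(\<And>i. i \<in> I \<Longrightarrow> in_poly_ring r (f i)) \<Longrightarrow> in_poly_ring r (prod f I)"
  by (induction I rule: infinite_finite_induct) (auto intro: ipr_mult ipr_one)

lemma ipr_power: "in_poly_ring r p \<Longrightarrow> in_poly_ring r (p ^ k)"
  by (induction k) (auto intro: ipr_mult ipr_one)

lemma ipr_single: "Poly_Mapping.keys m \<subseteq> {1..r} \<Longrightarrow> in_poly_ring r (Poly_Mapping.single m c)"
  unfolding in_poly_ring_def by auto

lemma nn_add: "nonneg_coeffs p \<Longrightarrow> nonneg_coeffs q \<Longrightarrow> nonneg_coeffs (p + q)"
  unfolding nonneg_coeffs_def by (simp add: lookup_add)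

lemma nn_sum_singles:
  assumes "\<And>i. i \<in> I \<Longrightarrow> c i \<ge> 0"
  shows "nonneg_coeffs (\<Sum>i\<in>I. Poly_Mapping.single (m i) (c i))"
  unfolding nonneg_coeffs_def
  by (auto simp: lookup_sum lookup_single when_def intro!: sum_nonneg assms)

lemma nn_mult: "nonneg_coeffs p \<Longrightarrow> nonneg_coeffs q \<Longrightarrow> nonneg_coeffs (p * q)"
proof -
  assume H: "nonneg_coeffs p" "nonneg_coeffs q"
  have "p * q = (\<Sum>m\<in>Poly_Mapping.keys p. Poly_Mapping.single m (Poly_Mapping.lookup p m)) *
                (\<Sum>m\<in>Poly_Mapping.keys q. Poly_Mapping.single m (Poly_Mapping.lookup q m))"
    by (subst (1) pm_expand[of p], subst (1) pm_expand[of q]) (rule refl)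
  also have "\<dots> = (\<Sum>m\<in>Poly_Mapping.keys p. \<Sum>m'\<in>Poly_Mapping.keys q.
       Poly_Mapping.single (m + m') (Poly_Mapping.lookup p m * Poly_Mapping.lookup q m'))"
    by (simp add: sum_product mult_single)
  finally show ?thesis
    using H unfolding nonneg_coeffs_def
    by (auto simp: lookup_sum lookup_single when_def intro!: sum_nonneg)
qed

lemma nn_cst: "c \<ge> 0 \<Longrightarrow> nonneg_coeffs (cst c)"
  unfolding nonneg_coeffs_def cst_def by (auto simp: lookup_single when_def)

lemma nn_zero: "nonneg_coeffs 0" using nn_cst[of 0] by simp
lemma nn_one: "nonneg_coeffs 1" using nn_cst[of 1] by simp

lemma nn_pvar: "nonneg_coeffs (pvar i)"
  unfolding nonneg_coeffs_def pvar_def by (auto simp: lookup_single when_def)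

lemma nn_sum: "(\<And>i. i \<in> I \<Longrightarrow> nonneg_coeffs (f i)) \<Longrightarrow> nonneg_coeffs (sum f I)"
  by (induction I rule: infinite_finite_induct) (auto intro: nn_add nn_zero)

lemma nn_prod: "(\<And>i. i \<in> I \<Longrightarrow> nonneg_coeffs (f i)) \<Longrightarrow> nonneg_coeffs (prod f I)"
  by (induction I rule: infinite_finite_induct) (auto intro: nn_mult nn_one)

lemma nn_power: "nonneg_coeffs p \<Longrightarrow> nonneg_coeffs (p ^ k)"
  by (induction k) (auto intro: nn_mult nn_one)

definition sC :: "nat set \<Rightarrow> rpoly" where "sC C = (\<Sum>i\<in>C. pvar i)"

definition Tset :: "nat \<Rightarrow> nat set set \<Rightarrow> rpoly set" where
  "Tset r PC = {g + (\<Sum>C\<in>PC. h C * (1 - (\<Sum>i\<in>C. pvar i))) | g h.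
              in_poly_ring r g \<and> nonneg_coeffs g \<and> (\<forall>C. in_poly_ring r (h C))}"

locale TS =
  fixes r :: nat and PC :: "nat set set"
  assumes finPC: "finite PC" and subPC: "\<And>C. C \<in> PC \<Longrightarrow> C \<subseteq> {1..r}"
begin

abbreviation "T \<equiv> Tset r PC"

lemma ipr_sC: "C \<in> PC \<Longrightarrow> in_poly_ring r (1 - (\<Sum>i\<in>C. pvar i))"
proof -
  assume "C \<in> PC"
  then have "\<And>i. i \<in> C \<Longrightarrow> in_poly_ring r (pvar i)" using subPC ipr_pvar by blast
  then show ?thesis by (intro ipr_diff ipr_one ipr_sum)
qed

lemma T_add: "p \<in> T \<Longrightarrow> q \<in> T \<Longrightarrow> p + q \<in> T"
proof -
  assume "p \<in> T" "q \<in> T"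
  then obtain g h g' h' where p: "p = g + (\<Sum>C\<in>PC. h C * (1 - (\<Sum>i\<in>C. pvar i)))"
    and q: "q = g' + (\<Sum>C\<in>PC. h' C * (1 - (\<Sum>i\<in>C. pvar i)))"
    and H: "in_poly_ring r g" "nonneg_coeffs g" "\<forall>C. in_poly_ring r (h C)"
    "in_poly_ring r g'" "nonneg_coeffs g'" "\<forall>C. in_poly_ring r (h' C)"
    unfolding Tset_def by blast
  have "p + q = (g + g') + (\<Sum>C\<in>PC. (h C + h' C) * (1 - (\<Sum>i\<in>C. pvar i)))"
  proof -
    have "(\<Sum>C\<in>PC. (h C + h' C) * (1 - (\<Sum>i\<in>C. pvar i))) = (\<Sum>C\<in>PC. h C * (1 - (\<Sum>i\<in>C. pvar i))) + (\<Sum>C\<in>PC. h' C * (1 - (\<Sum>i\<in>C. pvar i)))"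
      by (simp add: distrib_right sum.distrib)
    then show ?thesis by (simp add: p q add_ac)
  qed
  then show ?thesis unfolding Tset_def using H
    by (intro CollectI exI[of _ "g+g'"] exI[of _ "\<lambda>C. h C + h' C"]) (auto intro: ipr_add nn_add)
qed

lemma T_mult: "p \<in> T \<Longrightarrow> q \<in> T \<Longrightarrow> p * q \<in> T"
proof -
  assume "p \<in> T" "q \<in> T"
  then obtain g h g' h' where p: "p = g + (\<Sum>C\<in>PC. h C * (1 - (\<Sum>i\<in>C. pvar i)))"
    and q: "q = g' + (\<Sum>C\<in>PC. h' C * (1 - (\<Sum>i\<in>C. pvar i)))"
    and H: "in_poly_ring r g" "nonneg_coeffs g" "\<forall>C. in_poly_ring r (h C)"
    "in_poly_ring r g'" "nonneg_coeffs g'" "\<forall>C. in_poly_ring r (h' C)"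
    unfolding Tset_def by blast
  have iq: "in_poly_ring r q" unfolding q using H ipr_sC
    by (auto intro!: ipr_add ipr_sum ipr_mult)
  have "p * q = g * g' + (\<Sum>C\<in>PC. (g * h' C + h C * q) * (1 - (\<Sum>i\<in>C. pvar i)))"
  proof -
    have e1: "(\<Sum>C\<in>PC. (g * h' C + h C * q) * (1 - (\<Sum>i\<in>C. pvar i))) = g * (\<Sum>C\<in>PC. h' C * (1 - (\<Sum>i\<in>C. pvar i))) + (\<Sum>C\<in>PC. h C * (1 - (\<Sum>i\<in>C. pvar i))) * q"
    proof -
      have "(\<Sum>C\<in>PC. (g * h' C + h C * q) * (1 - (\<Sum>i\<in>C. pvar i))) = (\<Sum>C\<in>PC. g * (h' C * (1 - (\<Sum>i\<in>C. pvar i))) + (h C * (1 - (\<Sum>i\<in>C. pvar i))) * q)"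
        by (rule sum.cong) (simp_all add: algebra_simps)
      then show ?thesis by (simp add: sum.distrib sum_distrib_left sum_distrib_right)
    qed
    have "p * q = g * q + (\<Sum>C\<in>PC. h C * (1 - (\<Sum>i\<in>C. pvar i))) * q"
      by (simp add: p distrib_right)
    also have "g * q = g * g' + g * (\<Sum>C\<in>PC. h' C * (1 - (\<Sum>i\<in>C. pvar i)))"
      by (simp add: q distrib_left)
    finally show ?thesis by (simp add: e1 add_ac)
  qed
  then show ?thesis unfolding Tset_def using H iq
    by (intro CollectI exI[of _ "g*g'"] exI[of _ "\<lambda>C. g * h' C + h C * q"]) (auto intro: ipr_add ipr_mult nn_mult)
qed

lemma T_nn: "in_poly_ring r g \<Longrightarrow> nonneg_coeffs g \<Longrightarrow> g \<in> T"
  unfolding Tset_def by (intro CollectI exI[of _ g] exI[of _ "\<lambda>C. 0"]) (auto intro: ipr_zero)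

lemma T_cst: "c \<ge> 0 \<Longrightarrow> cst c \<in> T"
  by (rule T_nn) (auto intro: ipr_cst nn_cst)

lemma T_zero: "0 \<in> T" using T_cst[of 0] by simp

lemma T_pvar: "i \<in> {1..r} \<Longrightarrow> pvar i \<in> T"
  by (rule T_nn) (auto intro: ipr_pvar nn_pvar)

lemma T_sum: "(\<And>i. i \<in> I \<Longrightarrow> f i \<in> T) \<Longrightarrow> sum f I \<in> T"
  by (induction I rule: infinite_finite_induct) (auto intro: T_add T_zero)

lemma T_prod: "(\<And>i. i \<in> I \<Longrightarrow> f i \<in> T) \<Longrightarrow> prod f I \<in> T"
  by (induction I rule: infinite_finite_induct) (auto intro: T_mult T_cst[of 1, simplified])

lemma T_power: "p \<in> T \<Longrightarrow> p ^ k \<in> T"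
  by (induction k) (auto intro: T_mult T_cst[of 1, simplified])

lemma T_ideal: "t \<in> T \<Longrightarrow> (\<And>C. in_poly_ring r (k C)) \<Longrightarrow>
   t + (\<Sum>C\<in>PC. k C * (1 - (\<Sum>i\<in>C. pvar i))) \<in> T"
proof -
  assume "t \<in> T" and K: "\<And>C. in_poly_ring r (k C)"
  then obtain g h where t: "t = g + (\<Sum>C\<in>PC. h C * (1 - (\<Sum>i\<in>C. pvar i)))"
    and H: "in_poly_ring r g" "nonneg_coeffs g" "\<forall>C. in_poly_ring r (h C)"
    unfolding Tset_def by blast
  have "t + (\<Sum>C\<in>PC. k C * (1 - (\<Sum>i\<in>C. pvar i))) = g + (\<Sum>C\<in>PC. (h C + k C) * (1 - (\<Sum>i\<in>C. pvar i)))"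
  proof -
    have "(\<Sum>C\<in>PC. (h C + k C) * (1 - (\<Sum>i\<in>C. pvar i))) = (\<Sum>C\<in>PC. h C * (1 - (\<Sum>i\<in>C. pvar i))) + (\<Sum>C\<in>PC. k C * (1 - (\<Sum>i\<in>C. pvar i)))"
      by (simp add: distrib_right sum.distrib)
    then show ?thesis by (simp add: t add_ac)
  qed
  then show ?thesis unfolding Tset_def using H K
    by (intro CollectI exI[of _ g] exI[of _ "\<lambda>C. h C + k C"]) (auto intro: ipr_add)
qed

lemma T_one_minus_pvar:
  assumes "C \<in> PC" "i \<in> C"
  shows "1 - pvar i \<in> T"
proof -
  have fC: "finite C" using subPC[OF assms(1)] finite_subset by blast
  have "1 - pvar i = (\<Sum>l\<in>C-{i}. pvar l) + (\<Sum>C'\<in>PC. (if C' = C then 1 else 0) * (1 - (\<Sum>i\<in>C'. pvar i)))"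
  proof -
    have "(\<Sum>C'\<in>PC. (if C' = C then 1 else 0) * (1 - (\<Sum>i\<in>C'. pvar i))) = 1 - (\<Sum>i\<in>C. pvar i)"
    proof -
      have "(\<Sum>C'\<in>PC. (if C' = C then 1 else 0) * (1 - (\<Sum>i\<in>C'. pvar i))) = (\<Sum>C'\<in>PC. (if C' = C then 1 - (\<Sum>i\<in>C'. pvar i) else 0))"
        by (rule sum.cong) auto
      then show ?thesis using assms(1) finPC by simp
    qed
    moreover have "(\<Sum>i\<in>C. pvar i) = pvar i + (\<Sum>l\<in>C-{i}. pvar l)"
      using assms(2) fC by (simp add: sum.remove)
    ultimately show ?thesis by simp
  qed
  also have "\<dots> \<in> T"
  proof (intro T_ideal T_nn)
    have "\<And>l. l \<in> C-{i} \<Longrightarrow> in_poly_ring r (pvar l)" using subPC[OF assms(1)] ipr_pvar by blast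
    then show "in_poly_ring r (\<Sum>l\<in>C-{i}. pvar l)" by (intro ipr_sum)
    show "nonneg_coeffs (\<Sum>l\<in>C-{i}. pvar l)" by (intro nn_sum nn_pvar)
    show "\<And>C'. in_poly_ring r (if C' = C then 1 else 0)" using ipr_one ipr_zero by simp
  qed
  finally show ?thesis .
qed

lemma T_preprime: "preprime T"
  unfolding preprime_def
  using T_add T_mult T_cst by (auto simp: cst_def)

end

definition cc :: "nat \<Rightarrow> nat \<Rightarrow> nat \<Rightarrow> nat" where
  "cc d k j = (if k \<le> j then (d - k) choose (j - k) else 0)"

lemma bern_uni:
  fixes y :: "'a::comm_ring_1"
  assumes "k \<le> d"
  shows "y ^ k = (\<Sum>j\<in>{0..d}. of_nat (cc d k j) * (y ^ j * (1 - y) ^ (d - j)))"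
proof -
  have "y ^ k = y ^ k * (y + (1 - y)) ^ (d - k)" by simp
  also have "\<dots> = (\<Sum>l\<in>{0..d-k}. of_nat ((d-k) choose l) * (y ^ (l + k) * (1-y) ^ (d - (l + k))))"
    unfolding binomial_ring sum_distrib_left atLeast0AtMost
    by (rule sum.cong) (auto simp: power_add mult_ac add.commute)
  also have "\<dots> = (\<Sum>l\<in>{0..d-k}. of_nat (cc d k (l + k)) * (y ^ (l + k) * (1-y) ^ (d - (l + k))))"
    by (rule sum.cong) (auto simp: cc_def)
  also have "\<dots> = (\<Sum>j\<in>{0+k..d-k+k}. of_nat (cc d k j) * (y ^ j * (1 - y) ^ (d - j)))"
    by (rule sum.shift_bounds_cl_nat_ivl[symmetric])
  also have "\<dots> = (\<Sum>j\<in>{0..d}. of_nat (cc d k j) * (y ^ j * (1 - y) ^ (d - j)))"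
    using assms by (intro sum.mono_neutral_left) (auto simp: cc_def)
  finally show ?thesis .
qed

lemma cst_prod: "cst (prod f I) = (\<Prod>i\<in>I. cst (f i))"
  by (induction I rule: infinite_finite_induct) (auto simp: cst_mult)

lemma cst_sum: "cst (sum f I) = (\<Sum>i\<in>I. cst (f i))"
  by (induction I rule: infinite_finite_induct) (auto simp: cst_add)

definition BB :: "nat \<Rightarrow> nat \<Rightarrow> (nat \<Rightarrow> nat) \<Rightarrow> rpoly" where
  "BB r d J = (\<Prod>i\<in>{1..r}. pvar i ^ J i * (1 - pvar i) ^ (d - J i))"

lemma bern_monomial:
  assumes "Poly_Mapping.keys \<alpha> \<subseteq> {1..r}" "\<And>i. Poly_Mapping.lookup \<alpha> i \<le> d"
  shows "Poly_Mapping.single \<alpha> 1 = (\<Sum>J\<in>PiE {1..r} (\<lambda>_. {0..d}).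
      cst (\<Prod>i\<in>{1..r}. real (cc d (Poly_Mapping.lookup \<alpha> i) (J i))) * BB r d J)"
proof -
  have "Poly_Mapping.single \<alpha> 1 = (\<Prod>i\<in>{1..r}. pvar i ^ Poly_Mapping.lookup \<alpha> i)"
    using monomial_eq[of "{1..r}" \<alpha>] assms by simp
  also have "\<dots> = (\<Prod>i\<in>{1..r}. \<Sum>j\<in>{0..d}. of_nat (cc d (Poly_Mapping.lookup \<alpha> i) j) * (pvar i ^ j * (1 - pvar i) ^ (d - j)))"
    by (rule prod.cong[OF refl], rule bern_uni, rule assms(2))
  also have "\<dots> = (\<Sum>J\<in>PiE {1..r} (\<lambda>_. {0..d}). \<Prod>i\<in>{1..r}. of_nat (cc d (Poly_Mapping.lookup \<alpha> i) (J i)) * (pvar i ^ J i * (1 - pvar i) ^ (d - J i)))"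
    by (rule prod_sum_PiE) auto
  also have "\<dots> = (\<Sum>J\<in>PiE {1..r} (\<lambda>_. {0..d}).
      cst (\<Prod>i\<in>{1..r}. real (cc d (Poly_Mapping.lookup \<alpha> i) (J i))) * BB r d J)"
    by (rule sum.cong[OF refl]) (simp add: prod.distrib of_nat_cst cst_prod BB_def)
  finally show ?thesis .
qed

definition rho :: "nat \<Rightarrow> nat \<Rightarrow> nat \<Rightarrow> real" where
  "rho d k j = (\<Prod>l<k. (real j - real l) / (real d - real l))"

lemma cc_rho:
  assumes "k \<le> d" "j \<le> d"
  shows "real (cc d k j) = real (d choose j) * rho d k j"
proof (cases "k \<le> j")
  case True
  have cm: "(d choose j) * (j choose k) = (d choose k) * ((d - k) choose (j - k))"
    using choose_mult[OF True assms(2)] .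
  have pos: "real (d choose k) > 0" using assms by simp
  have r1: "real (j choose k) = (\<Prod>l<k. real (j - l) / (real k - real l))"
    using binomial_altdef_of_nat[OF True] by (simp add: lessThan_atLeast0)
  have r2: "real (d choose k) = (\<Prod>l<k. real (d - l) / (real k - real l))"
    using binomial_altdef_of_nat[OF assms(1)] by (simp add: lessThan_atLeast0)
  have "rho d k j = (\<Prod>l<k. (real (j - l) / (real k - real l)) / (real (d - l) / (real k - real l)))"
    unfolding rho_def
    by (rule prod.cong[OF refl]) (use True assms in \<open>auto simp: of_nat_diff\<close>)
  also have "\<dots> = (\<Prod>l<k. real (j - l) / (real k - real l)) / (\<Prod>l<k. real (d - l) / (real k - real l))"
    by (rule prod_dividef)
  also have "\<dots> = real (j choose k) / real (d choose k)" using r1 r2 by simp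
  finally have "rho d k j = real (j choose k) / real (d choose k)" .
  then have "real (d choose j) * rho d k j = real ((d choose j) * (j choose k)) / real (d choose k)"
    by simp
  also have "\<dots> = real ((d - k) choose (j - k))" unfolding cm using pos by simp
  finally show ?thesis using True by (simp add: cc_def)
next
  case False
  then have "j \<in> {..<k}" by simp
  then have "rho d k j = 0" unfolding rho_def by (intro prod_zero) auto
  then show ?thesis using False by (simp add: cc_def)
qed

lemma frac_step:
  fixes j k d :: real
  assumes "0 < d" "k < d" "k \<le> j" "j \<le> d" "0 \<le> k"
  shows "j / d - (j - k) / (d - k) \<le> k / d" "(j - k) / (d - k) \<le> j / d"
    "0 \<le> (j - k) / (d - k)" "(j - k) / (d - k) \<le> 1"
proof -
  have e: "j / d - (j - k) / (d - k) = k * (d - j) / (d * (d - k))"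
    using assms by (simp add: field_simps)
  have "k * (d - j) / (d * (d - k)) \<le> k / d"
  proof -
    have "k * (d - j) \<le> k * (d - k)" using assms by (intro mult_left_mono) auto
    then have "k * (d - j) / (d * (d - k)) \<le> k * (d - k) / (d * (d - k))"
      using assms by (intro divide_right_mono) auto
    also have "\<dots> = k / d" using assms by simp
    finally show ?thesis .
  qed
  then show "j / d - (j - k) / (d - k) \<le> k / d" using e by simp
  have "0 \<le> k * (d - j) / (d * (d - k))" using assms by simp
  then show "(j - k) / (d - k) \<le> j / d" using e by simp
  show "0 \<le> (j - k) / (d - k)" using assms by simp
  show "(j - k) / (d - k) \<le> 1" using assms by simp
qed

lemma rho_bounds:
  assumes "k \<le> d" "j \<le> d" "0 < d"
  shows "0 \<le> rho d k j \<and> rho d k j \<le> (real j / real d) ^ k \<and>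
         (real j / real d) ^ k - rho d k j \<le> real k ^ 2 / real d"
  using assms(1)
proof (induction k)
  case 0
  then show ?case by (simp add: rho_def)
next
  case (Suc k)
  let ?e = "real j / real d"
  have IH: "0 \<le> rho d k j" "rho d k j \<le> ?e ^ k" "?e ^ k - rho d k j \<le> real k ^ 2 / real d"
    using Suc by auto
  have e01: "0 \<le> ?e" "?e \<le> 1" using assms by auto
  have step: "rho d (Suc k) j = rho d k j * ((real j - real k) / (real d - real k))"
    by (simp add: rho_def)
  show ?case
  proof (cases "k \<le> j")
    case False
    then have "j \<in> {..<Suc k}" by simp
    then have z: "rho d (Suc k) j = 0" unfolding rho_def by (intro prod_zero) auto
    have "?e ^ Suc k = ?e * ?e ^ k" by simp
    also have "\<dots> \<le> ?e" using e01 by (intro mult_left_le power_le_one) auto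
    finally have "?e ^ Suc k \<le> ?e" .
    moreover have "?e \<le> real k / real d" using False assms by (simp add: divide_right_mono)
    moreover have "real k / real d \<le> real (Suc k) ^ 2 / real d" using assms
    proof (intro divide_right_mono)
      have "real k \<le> (1 + real k) * (1 + real k)" by (simp add: algebra_simps power2_eq_square)
      then show "real k \<le> real (Suc k) ^ 2" by (simp add: power2_eq_square)
    qed simp
    ultimately show ?thesis using z e01 by simp
  next
    case True
    let ?f = "(real j - real k) / (real d - real k)"
    have kd: "k < d" using Suc by simp
    note fs = frac_step[of "real d" "real k" "real j"]
    have f: "?e - ?f \<le> real k / real d" "?f \<le> ?e" "0 \<le> ?f" "?f \<le> 1"
      using fs True kd assms by auto
    have a: "0 \<le> rho d k j * ?f" using IH(1) f(3) by (rule mult_nonneg_nonneg)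
    have b: "rho d k j * ?f \<le> ?e ^ k * ?e" using IH f e01 by (intro mult_mono) auto
    have ek: "?e ^ k \<le> 1" "0 \<le> ?e ^ k" using e01 by (auto simp: power_le_one)
    have "?e ^ Suc k - rho d k j * ?f = ?e ^ k * (?e - ?f) + ?f * (?e ^ k - rho d k j)"
      by (simp add: algebra_simps)
    also have "\<dots> \<le> 1 * (real k / real d) + 1 * (real k ^ 2 / real d)"
      using f IH ek by (intro add_mono mult_mono) auto
    also have "\<dots> \<le> real (Suc k) ^ 2 / real d"
      using assms by (simp add: field_simps power2_eq_square)
    finally show ?thesis using a b step by (simp add: mult.commute)
  qed
qed

lemma prod_diff_le:
  fixes a b :: "'i \<Rightarrow> real"
  assumes "\<And>i. i \<in> I \<Longrightarrow> 0 \<le> a i \<and> a i \<le> 1 \<and> 0 \<le> b i \<and> b i \<le> 1"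
  shows "\<bar>prod a I - prod b I\<bar> \<le> (\<Sum>i\<in>I. \<bar>a i - b i\<bar>)"
  using assms
proof (induction I rule: infinite_finite_induct)
  case (insert x F)
  have A: "0 \<le> prod a F" "prod a F \<le> 1" using insert by (auto intro: prod_nonneg prod_le_1)
  have B: "\<bar>b x\<bar> \<le> 1" using insert by auto
  have "\<bar>prod a (insert x F) - prod b (insert x F)\<bar> = \<bar>(a x - b x) * prod a F + b x * (prod a F - prod b F)\<bar>"
    using insert by (simp add: algebra_simps)
  also have "\<dots> \<le> \<bar>a x - b x\<bar> * \<bar>prod a F\<bar> + \<bar>b x\<bar> * \<bar>prod a F - prod b F\<bar>"
    by (metis abs_mult abs_triangle_ineq)
  also have "\<dots> \<le> \<bar>a x - b x\<bar> * 1 + 1 * (\<Sum>i\<in>F. \<bar>a i - b i\<bar>)"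
    using A B insert by (intro add_mono mult_mono) auto
  finally show ?case using insert by simp
qed auto

context TS begin

lemma bern_T:
  assumes om: "\<And>i. i \<in> {1..r} \<Longrightarrow> 1 - pvar i \<in> T"
    and ipr: "in_poly_ring r p" and m: "m > 0"
    and pos: "\<And>x. (\<And>i. 0 \<le> x i \<and> x i \<le> 1) \<Longrightarrow> ev x p \<ge> m"
  shows "p \<in> T"
proof -
  define K where "K = Poly_Mapping.keys p"
  have finK: "finite K" by (simp add: K_def)
  have Kr: "\<And>\<alpha>. \<alpha> \<in> K \<Longrightarrow> Poly_Mapping.keys \<alpha> \<subseteq> {1..r}"
    using ipr by (auto simp: in_poly_ring_def K_def)
  define D where "D = (\<Sum>\<alpha>\<in>K. \<Sum>i\<in>{1..r}. Poly_Mapping.lookup \<alpha> i)"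
  have lD: "Poly_Mapping.lookup \<alpha> i \<le> D" if a: "\<alpha> \<in> K" for \<alpha> i
  proof (cases "i \<in> {1..r}")
    case True
    have "Poly_Mapping.lookup \<alpha> i \<le> (\<Sum>i\<in>{1..r}. Poly_Mapping.lookup \<alpha> i)"
      using True by (intro member_le_sum) auto
    also have "\<dots> \<le> D" unfolding D_def using a finK by (intro member_le_sum) auto
    finally show ?thesis .
  next
    case False
    then have "i \<notin> Poly_Mapping.keys \<alpha>" using Kr[OF a] by auto
    then show ?thesis by (simp add: in_keys_iff)
  qed
  define L where "L = (\<Sum>\<alpha>\<in>K. \<bar>Poly_Mapping.lookup p \<alpha>\<bar>)"
  have L0: "L \<ge> 0" unfolding L_def by (intro sum_nonneg) auto
  obtain n :: nat where n: "L * real r * real D ^ 2 / m < real n" using reals_Archimedean2 by blast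
  define d where "d = n + D + 1"
  have dD: "D \<le> d" "0 < d" by (auto simp: d_def)
  have dbig: "L * real r * real D ^ 2 / m < real d" using n by (simp add: d_def)
  have lDd: "Poly_Mapping.lookup \<alpha> i \<le> d" if "\<alpha> \<in> K" for \<alpha> i
    using lD[OF that, of i] dD by linarith
  define \<beta> where "\<beta> J = (\<Sum>\<alpha>\<in>K. Poly_Mapping.lookup p \<alpha> *
      (\<Prod>i\<in>{1..r}. real (cc d (Poly_Mapping.lookup \<alpha> i) (J i))))" for J
  define PI where "PI = PiE {1..r} (\<lambda>_::nat. {0..d})"
  have finPI: "finite PI" unfolding PI_def by (intro finite_PiE) auto
  have p_eq: "p = (\<Sum>J\<in>PI. cst (\<beta> J) * BB r d J)"
  proof -
    have "p = (\<Sum>\<alpha>\<in>K. Poly_Mapping.single \<alpha> (Poly_Mapping.lookup p \<alpha>))"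
      unfolding K_def by (rule pm_expand)
    also have "\<dots> = (\<Sum>\<alpha>\<in>K. cst (Poly_Mapping.lookup p \<alpha>) * (\<Sum>J\<in>PI.
      cst (\<Prod>i\<in>{1..r}. real (cc d (Poly_Mapping.lookup \<alpha> i) (J i))) * BB r d J))"
    proof (rule sum.cong[OF refl])
      fix \<alpha> assume a: "\<alpha> \<in> K"
      show "Poly_Mapping.single \<alpha> (Poly_Mapping.lookup p \<alpha>) = cst (Poly_Mapping.lookup p \<alpha>) * (\<Sum>J\<in>PI.
      cst (\<Prod>i\<in>{1..r}. real (cc d (Poly_Mapping.lookup \<alpha> i) (J i))) * BB r d J)"
      proof -
        have eq: "Poly_Mapping.single \<alpha> 1 = (\<Sum>J\<in>PiE {1..r} (\<lambda>_. {0..d}).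
          cst (\<Prod>i\<in>{1..r}. real (cc d (Poly_Mapping.lookup \<alpha> i) (J i))) * BB r d J)"
          by (rule bern_monomial[OF Kr[OF a] lDd[OF a]])
        show ?thesis by (subst single_cst) (simp only: eq PI_def)
      qed
    qed
    also have "\<dots> = (\<Sum>\<alpha>\<in>K. \<Sum>J\<in>PI. cst (Poly_Mapping.lookup p \<alpha> *
          (\<Prod>i\<in>{1..r}. real (cc d (Poly_Mapping.lookup \<alpha> i) (J i)))) * BB r d J)"
      by (simp only: sum_distrib_left cst_mult mult.assoc)
    also have "\<dots> = (\<Sum>J\<in>PI. \<Sum>\<alpha>\<in>K. cst (Poly_Mapping.lookup p \<alpha> *
          (\<Prod>i\<in>{1..r}. real (cc d (Poly_Mapping.lookup \<alpha> i) (J i)))) * BB r d J)"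
      by (rule sum.swap)
    also have "\<dots> = (\<Sum>J\<in>PI. cst (\<beta> J) * BB r d J)"
      by (simp only: \<beta>_def cst_sum sum_distrib_right)
    finally show ?thesis .
  qed
  have BB_T: "BB r d J \<in> T" for J
    unfolding BB_def by (intro T_prod T_mult T_power T_pvar om) auto
  have \<beta>_nn: "\<beta> J \<ge> 0" if J: "J \<in> PI" for J
  proof -
    have Jd: "J i \<le> d" if "i \<in> {1..r}" for i using J that by (auto simp: PI_def)
    define w where "w = (\<Prod>i\<in>{1..r}. real (d choose J i))"
    have wpos: "w > 0" unfolding w_def using Jd by (intro prod_pos) auto
    define \<Phi> where "\<Phi> = (\<Sum>\<alpha>\<in>K. Poly_Mapping.lookup p \<alpha> *
        (\<Prod>i\<in>{1..r}. rho d (Poly_Mapping.lookup \<alpha> i) (J i)))"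
    have \<beta>w: "\<beta> J = w * \<Phi>"
      unfolding \<beta>_def \<Phi>_def sum_distrib_left
    proof (rule sum.cong[OF refl])
      fix \<alpha> assume a: "\<alpha> \<in> K"
      have "(\<Prod>i\<in>{1..r}. real (cc d (Poly_Mapping.lookup \<alpha> i) (J i))) =
            (\<Prod>i\<in>{1..r}. real (d choose J i) * rho d (Poly_Mapping.lookup \<alpha> i) (J i))"
        by (rule prod.cong[OF refl], rule cc_rho[OF lDd[OF a] Jd])
      also have "\<dots> = w * (\<Prod>i\<in>{1..r}. rho d (Poly_Mapping.lookup \<alpha> i) (J i))"
        by (simp add: prod.distrib w_def)
      finally show "Poly_Mapping.lookup p \<alpha> * (\<Prod>i\<in>{1..r}. real (cc d (Poly_Mapping.lookup \<alpha> i) (J i))) =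
        w * (Poly_Mapping.lookup p \<alpha> * (\<Prod>i\<in>{1..r}. rho d (Poly_Mapping.lookup \<alpha> i) (J i)))"
        by simp
    qed
    define y where "y i = (if i \<in> {1..r} then real (J i) / real d else 0)" for i
    have y01: "0 \<le> y i \<and> y i \<le> 1" for i
      using Jd dD by (auto simp: y_def)
    have evm: "ev y p \<ge> m" using pos y01 by blast
    have evy: "ev y p = (\<Sum>\<alpha>\<in>K. Poly_Mapping.lookup p \<alpha> *
          (\<Prod>i\<in>{1..r}. (real (J i) / real d) ^ Poly_Mapping.lookup \<alpha> i))"
      unfolding ev_def K_def[symmetric]
    proof (rule sum.cong[OF refl])
      fix \<alpha> assume a: "\<alpha> \<in> K"
      have "mon y \<alpha> = (\<Prod>i\<in>{1..r}. y i ^ Poly_Mapping.lookup \<alpha> i)"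
        by (rule mon_superset[OF _ Kr[OF a]]) simp
      also have "\<dots> = (\<Prod>i\<in>{1..r}. (real (J i) / real d) ^ Poly_Mapping.lookup \<alpha> i)"
        by (rule prod.cong) (auto simp: y_def)
      finally show "Poly_Mapping.lookup p \<alpha> * mon y \<alpha> = Poly_Mapping.lookup p \<alpha> *
          (\<Prod>i\<in>{1..r}. (real (J i) / real d) ^ Poly_Mapping.lookup \<alpha> i)" by simp
    qed
    have per: "\<bar>(\<Prod>i\<in>{1..r}. rho d (Poly_Mapping.lookup \<alpha> i) (J i)) -
               (\<Prod>i\<in>{1..r}. (real (J i) / real d) ^ Poly_Mapping.lookup \<alpha> i)\<bar>
             \<le> real r * real D ^ 2 / real d" if a: "\<alpha> \<in> K" for \<alpha>
    proof -
      have B: "0 \<le> rho d (Poly_Mapping.lookup \<alpha> i) (J i) \<and>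
          rho d (Poly_Mapping.lookup \<alpha> i) (J i) \<le> (real (J i) / real d) ^ Poly_Mapping.lookup \<alpha> i \<and>
          (real (J i) / real d) ^ Poly_Mapping.lookup \<alpha> i - rho d (Poly_Mapping.lookup \<alpha> i) (J i)
             \<le> real (Poly_Mapping.lookup \<alpha> i) ^ 2 / real d" if i: "i \<in> {1..r}" for i
        by (rule rho_bounds[OF lDd[OF a] Jd[OF i] dD(2)])
      have e1: "(real (J i) / real d) ^ k \<le> 1" if i: "i \<in> {1..r}" for i k
        using Jd[OF i] dD by (intro power_le_one) auto
      have "\<bar>(\<Prod>i\<in>{1..r}. rho d (Poly_Mapping.lookup \<alpha> i) (J i)) -
               (\<Prod>i\<in>{1..r}. (real (J i) / real d) ^ Poly_Mapping.lookup \<alpha> i)\<bar>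
            \<le> (\<Sum>i\<in>{1..r}. \<bar>rho d (Poly_Mapping.lookup \<alpha> i) (J i) - (real (J i) / real d) ^ Poly_Mapping.lookup \<alpha> i\<bar>)"
      proof (rule prod_diff_le)
        fix i assume i: "i \<in> {1..r}"
        show "0 \<le> rho d (Poly_Mapping.lookup \<alpha> i) (J i) \<and> rho d (Poly_Mapping.lookup \<alpha> i) (J i) \<le> 1 \<and>
          0 \<le> (real (J i) / real d) ^ Poly_Mapping.lookup \<alpha> i \<and> (real (J i) / real d) ^ Poly_Mapping.lookup \<alpha> i \<le> 1"
          using B[OF i] e1[OF i, of "Poly_Mapping.lookup \<alpha> i"] by linarith
      qed
      also have "\<dots> \<le> (\<Sum>i\<in>{1..r}. real D ^ 2 / real d)"
      proof (rule sum_mono)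
        fix i assume i: "i \<in> {1..r}"
        have "real (Poly_Mapping.lookup \<alpha> i) ^ 2 \<le> real D ^ 2"
          using lD[OF a, of i] by (intro power_mono) auto
        then have "real (Poly_Mapping.lookup \<alpha> i) ^ 2 / real d \<le> real D ^ 2 / real d"
          by (intro divide_right_mono) auto
        then show "\<bar>rho d (Poly_Mapping.lookup \<alpha> i) (J i) - (real (J i) / real d) ^ Poly_Mapping.lookup \<alpha> i\<bar>
            \<le> real D ^ 2 / real d" using B[OF i] by linarith
      qed
      also have "\<dots> = real r * real D ^ 2 / real d" by simp
      finally show ?thesis .
    qed
    have "\<bar>\<Phi> - ev y p\<bar> = \<bar>\<Sum>\<alpha>\<in>K. Poly_Mapping.lookup p \<alpha> *
          ((\<Prod>i\<in>{1..r}. rho d (Poly_Mapping.lookup \<alpha> i) (J i)) -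
           (\<Prod>i\<in>{1..r}. (real (J i) / real d) ^ Poly_Mapping.lookup \<alpha> i))\<bar>"
      by (simp add: \<Phi>_def evy sum_subtractf right_diff_distrib)
    also have "\<dots> \<le> (\<Sum>\<alpha>\<in>K. \<bar>Poly_Mapping.lookup p \<alpha>\<bar> *
          \<bar>(\<Prod>i\<in>{1..r}. rho d (Poly_Mapping.lookup \<alpha> i) (J i)) -
           (\<Prod>i\<in>{1..r}. (real (J i) / real d) ^ Poly_Mapping.lookup \<alpha> i)\<bar>)"
      by (rule order_trans[OF sum_abs]) (simp add: abs_mult)
    also have "\<dots> \<le> (\<Sum>\<alpha>\<in>K. \<bar>Poly_Mapping.lookup p \<alpha>\<bar> * (real r * real D ^ 2 / real d))"
      by (intro sum_mono mult_left_mono per) auto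
    also have "\<dots> = L * (real r * real D ^ 2 / real d)"
      unfolding L_def by (rule sum_distrib_right[symmetric])
    also have "\<dots> < m"
    proof -
      have "L * real r * real D ^ 2 < m * real d" using dbig m by (simp add: field_simps)
      then show ?thesis using dD by (simp add: field_simps)
    qed
    finally have "\<bar>\<Phi> - ev y p\<bar> < m" .
    then have "\<Phi> > 0" using evm by linarith
    then show ?thesis using \<beta>w wpos by simp
  qed
  show ?thesis
    unfolding p_eq by (intro T_sum T_mult T_cst \<beta>_nn BB_T)
qed

end

context TS begin

definition Bd :: "rpoly \<Rightarrow> bool" where
  "Bd h \<longleftrightarrow> (\<exists>N::nat. N > 0 \<and> of_nat N + h \<in> T \<and> of_nat N - h \<in> T)"

lemma Bd_cst: "Bd (cst c)"
proof -
  define N where "N = nat (ceiling \<bar>c\<bar>) + 1"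
  have N: "real N \<ge> \<bar>c\<bar> + 0" "N > 0" unfolding N_def by (auto, linarith)
  have "(of_nat N :: rpoly) + cst c = cst (real N + c)" by (simp add: of_nat_cst cst_add)
  moreover have "(of_nat N :: rpoly) - cst c = cst (real N - c)" by (simp add: of_nat_cst cst_diff)
  ultimately show ?thesis unfolding Bd_def using N
    by (intro exI[of _ N]) (auto intro!: T_cst)
qed

lemma Bd_zero: "Bd 0" using Bd_cst[of 0] by simp
lemma Bd_one: "Bd 1" using Bd_cst[of 1] by simp

lemma Bd_pvar:
  assumes "i \<in> {1..r}" "1 - pvar i \<in> T"
  shows "Bd (pvar i)"
proof -
  have "1 + pvar i \<in> T" using assms by (intro T_add T_pvar T_cst[of 1, simplified]) auto
  then show ?thesis unfolding Bd_def using assms by (intro exI[of _ 1]) auto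
qed

lemma Bd_add: "Bd a \<Longrightarrow> Bd b \<Longrightarrow> Bd (a + b)"
proof -
  assume "Bd a" "Bd b"
  then obtain N M :: nat where H: "N > 0" "of_nat N + a \<in> T" "of_nat N - a \<in> T"
    "M > 0" "of_nat M + b \<in> T" "of_nat M - b \<in> T" unfolding Bd_def by blast
  have e1: "of_nat (N + M) + (a + b) = (of_nat N + a) + (of_nat M + b :: rpoly)" by (simp add: add_ac)
  have e2: "of_nat (N + M) - (a + b) = (of_nat N - a) + (of_nat M - b :: rpoly)" by (simp add: algebra_simps)
  have "of_nat (N + M) + (a + b) \<in> T" unfolding e1 by (rule T_add[OF H(2) H(5)])
  moreover have "of_nat (N + M) - (a + b) \<in> T" unfolding e2 by (rule T_add[OF H(3) H(6)])
  ultimately show ?thesis unfolding Bd_def using H by (intro exI[of _ "N + M"]) auto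
qed

lemma half_two: "cst (1/2) * (2 * x) = (x :: rpoly)"
proof -
  have c2: "(2::rpoly) = cst 2" by (simp add: cst_def)
  have "cst (1/2) * (2 * x) = (cst (1/2) * cst 2) * x" by (simp only: c2 mult.assoc)
  also have "\<dots> = cst (1/2 * 2) * x" by (simp only: cst_mult)
  finally show ?thesis by simp
qed

lemma Bd_mult: "Bd a \<Longrightarrow> Bd b \<Longrightarrow> Bd (a * b)"
proof -
  assume "Bd a" "Bd b"
  then obtain N M :: nat where H: "N > 0" "of_nat N + a \<in> T" "of_nat N - a \<in> T"
    "M > 0" "of_nat M + b \<in> T" "of_nat M - b \<in> T" unfolding Bd_def by blast
  have h: "cst (1/2) \<in> T" by (rule T_cst) simp
  have e1: "(of_nat N + a) * (of_nat M + b) + (of_nat N - a) * (of_nat M - b) = 2 * (of_nat (N * M) + a * b :: rpoly)"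
    by (simp add: algebra_simps)
  have e2: "(of_nat N + a) * (of_nat M - b) + (of_nat N - a) * (of_nat M + b) = 2 * (of_nat (N * M) - a * b :: rpoly)"
    by (simp add: algebra_simps)
  have "of_nat (N * M) + a * b = cst (1/2) * ((of_nat N + a) * (of_nat M + b) + (of_nat N - a) * (of_nat M - b))"
    unfolding e1 half_two ..
  also have "\<dots> \<in> T" by (rule T_mult[OF h T_add[OF T_mult[OF H(2) H(5)] T_mult[OF H(3) H(6)]]])
  finally have p: "of_nat (N * M) + a * b \<in> T" .
  have "of_nat (N * M) - a * b = cst (1/2) * ((of_nat N + a) * (of_nat M - b) + (of_nat N - a) * (of_nat M + b))"
    unfolding e2 half_two ..
  also have "\<dots> \<in> T" by (rule T_mult[OF h T_add[OF T_mult[OF H(2) H(6)] T_mult[OF H(3) H(5)]]])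
  finally have m: "of_nat (N * M) - a * b \<in> T" .
  show ?thesis unfolding Bd_def using p m H by (intro exI[of _ "N * M"]) auto
qed

lemma Bd_sum: "(\<And>i. i \<in> I \<Longrightarrow> Bd (f i)) \<Longrightarrow> Bd (sum f I)"
  by (induction I rule: infinite_finite_induct) (auto intro: Bd_add Bd_zero)

lemma Bd_prod: "(\<And>i. i \<in> I \<Longrightarrow> Bd (f i)) \<Longrightarrow> Bd (prod f I)"
  by (induction I rule: infinite_finite_induct) (auto intro: Bd_mult Bd_one)

lemma Bd_power: "Bd a \<Longrightarrow> Bd (a ^ k)"
  by (induction k) (auto intro: Bd_mult Bd_one)

lemma T_archimedean:
  assumes om: "\<And>i. i \<in> {1..r} \<Longrightarrow> 1 - pvar i \<in> T"
  shows "archimedean r T"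
  unfolding archimedean_def
proof (intro allI impI)
  fix h assume ih: "in_poly_ring r h"
  have "h = (\<Sum>\<alpha>\<in>Poly_Mapping.keys h. Poly_Mapping.single \<alpha> (Poly_Mapping.lookup h \<alpha>))"
    by (rule pm_expand)
  also have "\<dots> = (\<Sum>\<alpha>\<in>Poly_Mapping.keys h. cst (Poly_Mapping.lookup h \<alpha>) *
                    (\<Prod>i\<in>{1..r}. pvar i ^ Poly_Mapping.lookup \<alpha> i))"
  proof (rule sum.cong[OF refl])
    fix \<alpha> assume "\<alpha> \<in> Poly_Mapping.keys h"
    then have k: "Poly_Mapping.keys \<alpha> \<subseteq> {1..r}" using ih by (auto simp: in_poly_ring_def)
    show "Poly_Mapping.single \<alpha> (Poly_Mapping.lookup h \<alpha>) = cst (Poly_Mapping.lookup h \<alpha>) *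
                    (\<Prod>i\<in>{1..r}. pvar i ^ Poly_Mapping.lookup \<alpha> i)"
      by (subst single_cst) (simp only: monomial_eq[OF _ k] finite_atLeastAtMost)
  qed
  finally have eq: "h = (\<Sum>\<alpha>\<in>Poly_Mapping.keys h. cst (Poly_Mapping.lookup h \<alpha>) *
                    (\<Prod>i\<in>{1..r}. pvar i ^ Poly_Mapping.lookup \<alpha> i))" .
  have "Bd (\<Sum>\<alpha>\<in>Poly_Mapping.keys h. cst (Poly_Mapping.lookup h \<alpha>) *
                    (\<Prod>i\<in>{1..r}. pvar i ^ Poly_Mapping.lookup \<alpha> i))"
    by (intro Bd_sum Bd_mult Bd_cst Bd_prod Bd_power Bd_pvar om)
  then have "Bd h" by (subst eq)
  then show "\<exists>N. 0 < N \<and> of_nat N + h \<in> T \<and> of_nat N - h \<in> T" unfolding Bd_def .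
qed

end

lemma compact_box: "compact {x :: nat \<Rightarrow> real. \<forall>i. 0 \<le> x i \<and> x i \<le> 1}"
proof -
  have e: "{x :: nat \<Rightarrow> real. \<forall>i. 0 \<le> x i \<and> x i \<le> 1} = PiE UNIV (\<lambda>_. {0..1})"
    by (auto simp: PiE_def extensional_def)
  have "compactin (product_topology (\<lambda>i. euclidean) UNIV) (PiE UNIV (\<lambda>_::nat. {0..1::real}))"
    by (subst compactin_PiE) auto
  then show ?thesis unfolding e euclidean_product_topology by simp
qed

lemma cont_coord: "continuous_on S (\<lambda>x::nat \<Rightarrow> real. x i)"
  by (rule continuous_on_subset[OF continuous_on_product_coordinates]) auto

lemma cont_ev: "continuous_on S (\<lambda>x. ev x p)"
  unfolding ev_def mon_def by (intro continuous_intros cont_coord)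

lemma pos_combination:
  fixes f q :: "(nat \<Rightarrow> real) \<Rightarrow> real"
  assumes B: "compact B" "B \<noteq> {}" and cf: "continuous_on B f" and cq: "continuous_on B q"
    and q0: "\<And>x. x \<in> B \<Longrightarrow> q x \<ge> 0" and qf: "\<And>x. x \<in> B \<Longrightarrow> q x = 0 \<Longrightarrow> f x > 0"
  shows "\<exists>lam\<ge>0. \<exists>m>0. \<forall>x\<in>B. f x + lam * q x \<ge> m"
proof -
  define U where "U = {x\<in>B. f x \<le> 0}"
  have "closed B" using B compact_imp_closed by blast
  then have "closed U" unfolding U_def
    by (intro continuous_on_closed_Collect_le cf continuous_on_const)
  then have cU: "compact U" using B(1) compact_Int_closed[of B U] by (simp add: U_def Int_absorb1 Int_def)
  obtain lam where lam0: "lam \<ge> 0" and lamp: "\<forall>x\<in>B. f x + lam * q x > 0"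
  proof (cases "U = {}")
    case True
    then have "\<forall>x\<in>B. f x + 0 * q x > 0" by (auto simp: U_def not_le)
    then show ?thesis using that[of 0] by auto
  next
    case False
    obtain x0 where x0: "x0 \<in> U" "\<forall>y\<in>U. q x0 \<le> q y"
      using continuous_attains_inf[OF cU False continuous_on_subset[OF cq]] by (auto simp: U_def)
    have dpos: "q x0 > 0" using x0(1) q0 qf unfolding U_def by force
    obtain x1 where x1: "x1 \<in> B" "\<forall>y\<in>B. f x1 \<le> f y"
      using continuous_attains_inf[OF B cf] by auto
    define lam where "lam = (\<bar>f x1\<bar> + 1) / q x0"
    have "\<forall>x\<in>B. f x + lam * q x > 0"
    proof
      fix x assume xB: "x \<in> B"
      show "f x + lam * q x > 0"
      proof (cases "x \<in> U")
        case True
        have "lam * q x \<ge> lam * q x0" using x0 True dpos by (intro mult_left_mono) (auto simp: lam_def)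
        also have "lam * q x0 = \<bar>f x1\<bar> + 1" using dpos by (simp add: lam_def)
        moreover have "f x1 \<le> f x" using x1 xB by blast
        moreover have "- f x1 \<le> \<bar>f x1\<bar>" by simp
        ultimately show ?thesis by linarith
      next
        case False
        then have "f x > 0" using xB by (auto simp: U_def)
        moreover have "lam * q x \<ge> 0" using q0[OF xB] dpos by (simp add: lam_def)
        ultimately show ?thesis by linarith
      qed
    qed
    then show ?thesis using that[of lam] dpos by (auto simp: lam_def)
  qed
  have cg: "continuous_on B (\<lambda>x. f x + lam * q x)" by (intro continuous_intros cf cq)
  obtain x2 where x2: "x2 \<in> B" "\<forall>y\<in>B. f x2 + lam * q x2 \<le> f y + lam * q y"
    using continuous_attains_inf[OF B cg] by auto
  show ?thesis using lam0 lamp x2 by (intro exI[of _ lam] conjI exI[of _ "f x2 + lam * q x2"]) auto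
qed

lemma powi_sum: "(x::real) \<noteq> 0 \<Longrightarrow> x powi (\<Sum>i\<in>I. f i) = (\<Prod>i\<in>I. x powi f i)"
  by (induction I rule: infinite_finite_induct) (auto simp: power_int_add)

lemma prod_powi: "(\<Prod>i\<in>I. f i :: real) powi n = (\<Prod>i\<in>I. f i powi n)"
  by (induction I rule: infinite_finite_induct) (auto simp: power_int_mult_distrib)

lemma inner_rvec: "rvec u \<bullet> rvec v = real_of_int (idot u v)"
  by (simp add: inner_vec_def rvec_def idot_def)

definition Expo :: "(int ^ 'n) set \<Rightarrow> (nat \<Rightarrow> int ^ 'n) \<Rightarrow> int ^ 'n \<Rightarrow> nat \<Rightarrow> nat" where
  "Expo A F a i = nat (idot (F i) a + offset A F i)"

lemma Ex_int: "finite A \<Longrightarrow> a \<in> A \<Longrightarrow> int (Expo A F a i) = idot (F i) a + offset A F i"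
proof -
  assume "finite A" "a \<in> A"
  then have "Min ((\<lambda>a. idot (F i) a) ` A) \<le> idot (F i) a" by (intro Min_le) auto
  then show ?thesis by (simp add: Expo_def offset_def)
qed

lemma lookup_sum_single:
  "finite I \<Longrightarrow> Poly_Mapping.lookup (\<Sum>i\<in>I. Poly_Mapping.single i (g i)) j = (if j \<in> I then g j else (0::nat))"
  by (simp add: lookup_sum lookup_single when_def sum.delta)

lemma ev_cox:
  "ev x (cox_poly A r F c) = (\<Sum>a\<in>A. c a * (\<Prod>i\<in>{1..r}. x i ^ Expo A F a i))"
proof -
  have "ev x (cox_poly A r F c) = (\<Sum>a\<in>A. c a * mon x (\<Sum>i\<in>{1..r}. Poly_Mapping.single i (Expo A F a i)))"
    unfolding cox_poly_def Expo_def by (simp add: ev_sum ev_single)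
  also have "\<dots> = (\<Sum>a\<in>A. c a * (\<Prod>i\<in>{1..r}. x i ^ Expo A F a i))"
  proof (rule sum.cong[OF refl])
    fix a
    have k: "Poly_Mapping.keys (\<Sum>i\<in>{1..r}. Poly_Mapping.single i (Expo A F a i)) \<subseteq> {1..r}"
      by (auto simp: in_keys_iff lookup_sum_single split: if_splits)
    show "c a * mon x (\<Sum>i\<in>{1..r}. Poly_Mapping.single i (Expo A F a i)) = c a * (\<Prod>i\<in>{1..r}. x i ^ Expo A F a i)"
    proof -
      have "mon x (\<Sum>i\<in>{1..r}. Poly_Mapping.single i (Expo A F a i)) = (\<Prod>i\<in>{1..r}. x i ^ Poly_Mapping.lookup (\<Sum>i\<in>{1..r}. Poly_Mapping.single i (Expo A F a i)) i)"
        by (rule mon_superset[OF _ k]) simp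
      also have "\<dots> = (\<Prod>i\<in>{1..r}. x i ^ Expo A F a i)"
        by (rule prod.cong[OF refl]) (simp add: lookup_sum_single)
      finally show ?thesis by simp
    qed
  qed
  finally show ?thesis .
qed

lemma ipr_cox: "in_poly_ring r (cox_poly A r F c)"
proof -
  have "\<forall>m\<in>Poly_Mapping.keys (cox_poly A r F c). Poly_Mapping.keys m \<subseteq> {1..r}"
  proof
    fix m assume "m \<in> Poly_Mapping.keys (cox_poly A r F c)"
    then have "m \<in> (\<Union>a\<in>A. Poly_Mapping.keys (Poly_Mapping.single
      (\<Sum>i\<in>{1..r}. Poly_Mapping.single i (nat (idot (F i) a + offset A F i))) (c a)))"
    proof -
      have "Poly_Mapping.keys (cox_poly A r F c) \<subseteq> (\<Union>a\<in>A. Poly_Mapping.keys (Poly_Mapping.single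
      (\<Sum>i\<in>{1..r}. Poly_Mapping.single i (nat (idot (F i) a + offset A F i))) (c a)))"
        unfolding cox_poly_def by (rule keys_sum)
      then show ?thesis using \<open>m \<in> Poly_Mapping.keys (cox_poly A r F c)\<close> by (rule subsetD)
    qed
    then obtain a where "m = (\<Sum>i\<in>{1..r}. Poly_Mapping.single i (nat (idot (F i) a + offset A F i)))"
      by (auto split: if_splits)
    then show "Poly_Mapping.keys m \<subseteq> {1..r}"
      by (auto simp: in_keys_iff lookup_sum_single split: if_splits)
  qed
  then show ?thesis unfolding in_poly_ring_def .
qed

lemma vertex_exists:
  fixes A :: "(int ^ 'n) set" and F :: "nat \<Rightarrow> int ^ 'n" and x :: "nat \<Rightarrow> real"
  defines "P \<equiv> convex hull (rvec ` A)"
  assumes finA: "finite A"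
    and xs: "\<And>C. primitive_collection P r F C \<Longrightarrow> (\<Sum>i\<in>C. x i) = 1"
  shows "\<exists>a0\<in>A. \<forall>i\<in>{1..r}. x i = 0 \<longrightarrow> Expo A F a0 i = 0"
proof -
  define Z where "Z = {i\<in>{1..r}. x i = 0}"
  have finZ: "finite Z" unfolding Z_def by auto
  have ric: "rays_in_cone P F Z"
  proof (rule ccontr)
    assume nZ: "\<not> rays_in_cone P F Z"
    define S where "S = {C. C \<subseteq> Z \<and> \<not> rays_in_cone P F C}"
    have "Z \<in> S" using nZ by (simp add: S_def)
    then obtain C where C: "C \<in> S" and Cmin: "\<And>C'. C' \<in> S \<Longrightarrow> card C \<le> card C'"
      using ex_has_least_nat[of "\<lambda>C. C \<in> S" Z card] by blast
    have CZ: "C \<subseteq> Z" and nC: "\<not> rays_in_cone P F C" using C by (auto simp: S_def)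
    have finC: "finite C" using CZ finZ finite_subset by blast
    have "primitive_collection P r F C"
      unfolding primitive_collection_def
    proof (intro conjI allI impI)
      show "C \<subseteq> {1..r}" using CZ by (auto simp: Z_def)
      show "\<not> rays_in_cone P F C" by fact
      fix C' assume C': "C' \<subset> C"
      show "rays_in_cone P F C'"
      proof (rule ccontr)
        assume "\<not> rays_in_cone P F C'"
        then have "C' \<in> S" using C' CZ by (auto simp: S_def)
        then have "card C \<le> card C'" by (rule Cmin)
        moreover have "card C' < card C" by (rule psubset_card_mono[OF finC C'])
        ultimately show False by simp
      qed
    qed
    then have "(\<Sum>i\<in>C. x i) = 1" by (rule xs)
    moreover have "(\<Sum>i\<in>C. x i) = 0" using CZ by (intro sum.neutral) (auto simp: Z_def)
    ultimately show False by simp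
  qed
  then obtain \<sigma> where \<sigma>: "\<sigma> \<in> normal_fan P" "\<forall>i\<in>Z. rvec (F i) \<in> \<sigma>"
    unfolding rays_in_cone_def by blast
  then obtain Fc where Fc: "\<sigma> = {u. \<forall>x\<in>Fc. \<forall>y\<in>P. u \<bullet> x \<le> u \<bullet> y}" "Fc face_of P" "Fc \<noteq> {}"
    unfolding normal_fan_def by blast
  have "compact (rvec ` A)" using finA by (intro finite_imp_compact) simp
  then have cP: "compact P" "convex P" unfolding P_def
    by (auto intro: compact_convex_hull convex_convex_hull)
  have cF: "compact Fc" "convex Fc" using face_of_imp_compact[OF cP(2) cP(1) Fc(2)] face_of_imp_convex[OF Fc(2)]
    by auto
  obtain v where v: "v extreme_point_of Fc" using extreme_point_exists_convex[OF cF Fc(3)] by blast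
  have vP: "v extreme_point_of P" "v \<in> Fc" using extreme_point_of_face[OF Fc(2)] v by auto
  have "v \<in> rvec ` A" using vP(1) unfolding P_def by (rule extreme_point_of_convex_hull)
  then obtain a0 where a0: "a0 \<in> A" "v = rvec a0" by blast
  have "Expo A F a0 i = 0" if i: "i \<in> {1..r}" "x i = 0" for i
  proof -
    have "i \<in> Z" using i by (simp add: Z_def)
    then have "rvec (F i) \<in> \<sigma>" using \<sigma> by blast
    then have le: "\<forall>y\<in>P. rvec (F i) \<bullet> v \<le> rvec (F i) \<bullet> y" using Fc(1) vP(2) by blast
    have "idot (F i) a0 \<le> idot (F i) a" if "a \<in> A" for a
    proof -
      have "rvec a \<in> P" unfolding P_def using that by (simp add: hull_inc)
      then have "rvec (F i) \<bullet> rvec a0 \<le> rvec (F i) \<bullet> rvec a" using le a0 by blast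
      then show ?thesis by (simp add: inner_rvec)
    qed
    then have "Min ((\<lambda>a. idot (F i) a) ` A) = idot (F i) a0"
      using finA a0 by (intro Min_eqI) auto
    then show ?thesis by (simp add: Expo_def offset_def)
  qed
  then show ?thesis using a0 by blast
qed

lemma cox_pos:
  fixes A :: "(int ^ 'n) set" and F :: "nat \<Rightarrow> int ^ 'n" and c :: "int ^ 'n \<Rightarrow> real" and x :: "nat \<Rightarrow> real"
  assumes finA: "finite A" and cop: "strictly_A_copositive A c"
    and x0: "\<And>i. 0 \<le> x i"
    and a0: "a0 \<in> A" "\<forall>i\<in>{1..r}. x i = 0 \<longrightarrow> Expo A F a0 i = 0"
  shows "(\<Sum>a\<in>A. c a * (\<Prod>i\<in>{1..r}. x i ^ Expo A F a i)) > 0"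
proof -
  obtain \<epsilon> where \<epsilon>: "\<epsilon> > 0" and cp: "\<And>d t. (\<forall>a\<in>A. \<bar>d a - c a\<bar> < \<epsilon>) \<Longrightarrow>
      (\<forall>j. t $ j > 0) \<Longrightarrow> laurent_eval A d t \<ge> 0"
    using cop unfolding strictly_A_copositive_def by blast
  define \<delta> where "\<delta> = \<epsilon> / 2"
  have \<delta>: "\<delta> > 0" "\<delta> < \<epsilon>" using \<epsilon> by (auto simp: \<delta>_def)
  define d where "d a = c a - \<delta>" for a :: "int ^ 'n"
  define G where "G s = (\<Sum>a\<in>A. d a * (\<Prod>i\<in>{1..r}. (x i + s) ^ Expo A F a i))" for s :: real
  have Gpos: "G s \<ge> 0" if s: "s > 0" for s
  proof -
    define x' where "x' i = x i + s" for i
    have x'p: "x' i > 0" for i using x0[of i] s by (simp add: x'_def)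
    define t :: "real ^ 'n" where "t = (\<chi> j. \<Prod>i\<in>{1..r}. x' i powi (F i $ j))"
    have tp: "\<forall>j. t $ j > 0" unfolding t_def using x'p by (auto intro!: prod_pos)
    define \<mu> where "\<mu> = (\<Prod>i\<in>{1..r}. x' i powi offset A F i)"
    have \<mu>p: "\<mu> > 0" unfolding \<mu>_def using x'p by (auto intro!: prod_pos)
    have key: "(\<Prod>i\<in>{1..r}. x' i ^ Expo A F a i) = \<mu> * (\<Prod>j\<in>UNIV. (t $ j) powi (a $ j))" if a: "a \<in> A" for a
    proof -
      have nz: "x' i \<noteq> 0" for i using x'p[of i] by simp
      have "(\<Prod>i\<in>{1..r}. x' i ^ Expo A F a i) = (\<Prod>i\<in>{1..r}. x' i powi int (Expo A F a i))"
        by simp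
      also have "\<dots> = (\<Prod>i\<in>{1..r}. x' i powi (idot (F i) a + offset A F i))"
        using Ex_int[OF finA a] by simp
      also have "\<dots> = (\<Prod>i\<in>{1..r}. x' i powi idot (F i) a * x' i powi offset A F i)"
        by (rule prod.cong[OF refl]) (simp add: power_int_add nz)
      also have "\<dots> = (\<Prod>i\<in>{1..r}. x' i powi idot (F i) a) * \<mu>"
        by (simp add: prod.distrib \<mu>_def)
      also have "(\<Prod>i\<in>{1..r}. x' i powi idot (F i) a) = (\<Prod>i\<in>{1..r}. \<Prod>j\<in>UNIV. (x' i powi (F i $ j)) powi (a $ j))"
        by (rule prod.cong[OF refl]) (simp add: idot_def powi_sum nz power_int_mult)
      also have "\<dots> = (\<Prod>j\<in>UNIV. \<Prod>i\<in>{1..r}. (x' i powi (F i $ j)) powi (a $ j))"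
        by (rule prod.swap)
      also have "\<dots> = (\<Prod>j\<in>UNIV. (t $ j) powi (a $ j))"
        by (rule prod.cong[OF refl]) (simp add: t_def prod_powi)
      finally show ?thesis by simp
    qed
    have "\<forall>a\<in>A. \<bar>d a - c a\<bar> < \<epsilon>" using \<delta> by (simp add: d_def)
    then have le: "laurent_eval A d t \<ge> 0" using cp tp by blast
    have "G s = (\<Sum>a\<in>A. d a * (\<mu> * (\<Prod>j\<in>UNIV. (t $ j) powi (a $ j))))"
      unfolding G_def by (rule sum.cong[OF refl]) (simp add: key[symmetric] x'_def)
    also have "\<dots> = \<mu> * laurent_eval A d t"
      by (simp add: laurent_eval_def sum_distrib_left mult_ac)
    finally show ?thesis using le \<mu>p by simp
  qed
  have cG: "continuous_on UNIV G" unfolding G_def by (intro continuous_intros)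
  then have "(G \<longlongrightarrow> G 0) (at 0)" by (simp add: continuous_on_def)
  then have "(G \<longlongrightarrow> G 0) (at_right 0)" by (rule tendsto_mono[OF at_le, rotated]) simp
  moreover have "eventually (\<lambda>s. 0 \<le> G s) (at_right (0::real))"
    using eventually_at_right_less[of "0::real"] by eventually_elim (rule Gpos)
  ultimately have G0: "0 \<le> G 0" by (rule tendsto_lowerbound) simp
  define Y where "Y a = (\<Prod>i\<in>{1..r}. x i ^ Expo A F a i)" for a
  have Y0: "Y a \<ge> 0" for a unfolding Y_def using x0 by (auto intro!: prod_nonneg)
  have Ya0: "Y a0 > 0" unfolding Y_def
  proof (intro prod_pos)
    fix i assume i: "i \<in> {1..r}"
    show "0 < x i ^ Expo A F a0 i"
    proof (cases "x i = 0")
      case True then show ?thesis using a0 i by simp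
    next
      case False then show ?thesis using x0[of i] by simp
    qed
  qed
  have g0: "G 0 = (\<Sum>a\<in>A. (c a - \<delta>) * Y a)" by (simp add: G_def Y_def d_def)
  have "(\<Sum>a\<in>A. c a * Y a) = (\<Sum>a\<in>A. (c a - \<delta>) * Y a + \<delta> * Y a)"
    by (rule sum.cong) (simp_all add: algebra_simps)
  also have "\<dots> = G 0 + \<delta> * (\<Sum>a\<in>A. Y a)"
    by (simp only: sum.distrib sum_distrib_left g0)
  moreover have "(\<Sum>a\<in>A. Y a) \<ge> Y a0" using finA a0 Y0 by (intro member_le_sum) auto
  ultimately have "(\<Sum>a\<in>A. c a * Y a) > 0"
    using G0 Ya0 \<delta> by (smt (verit) mult_pos_pos)
  then show ?thesis by (simp add: Y_def)
qed

theorem mainTheorem10: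
  fixes A :: "(int ^ 'n) set" and r :: nat and F :: "nat \<Rightarrow> int ^ 'n"
  defines "P \<equiv> convex hull (rvec ` A)"
  defines "PC \<equiv> {C. primitive_collection P r F C}"
  defines "T \<equiv> {g + (\<Sum>C\<in>PC. h C * (1 - (\<Sum>i\<in>C. pvar i))) | g h.
              in_poly_ring r g \<and> nonneg_coeffs g \<and> (\<forall>C. in_poly_ring r (h C))}"
  assumes "finite A"
    and "aff_dim P = int CARD('n)"
    and "bij_betw F {1..r} (ray_generators P)"
    and "\<Union>PC = {1..r}"
  shows "preprime T \<and> archimedean r T \<and>
    (\<forall>c. strictly_A_copositive A c \<longrightarrow>
       (\<exists>g h. in_poly_ring r g \<and> nonneg_coeffs g \<and> (\<forall>C\<in>PC. in_poly_ring r (h C)) \<and>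
          cox_poly A r F c = g + (\<Sum>C\<in>PC. h C * (1 - (\<Sum>i\<in>C. pvar i)))))"
proof -
  note finA = assms(4)
  note cover = assms(7)
  have PCsub: "C \<subseteq> {1..r}" if "C \<in> PC" for C
    using that by (simp add: PC_def primitive_collection_def)
  have finPC: "finite PC"
    by (rule finite_subset[of _ "Pow {1..r}"]) (use PCsub in auto)
  have ts: "TS r PC" by unfold_locales (use finPC PCsub in auto)
  have TT: "T = Tset r PC" unfolding T_def Tset_def ..
  have om: "1 - pvar i \<in> Tset r PC" if i: "i \<in> {1..r}" for i
  proof -
    obtain C where "C \<in> PC" "i \<in> C" using i cover by blast
    then show ?thesis by (rule TS.T_one_minus_pvar[OF ts])
  qed
  have part1: "preprime T" unfolding TT by (rule TS.T_preprime[OF ts])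
  have part2: "archimedean r T" unfolding TT by (rule TS.T_archimedean[OF ts om])
  have part3: "\<exists>g h. in_poly_ring r g \<and> nonneg_coeffs g \<and> (\<forall>C\<in>PC. in_poly_ring r (h C)) \<and>
          cox_poly A r F c = g + (\<Sum>C\<in>PC. h C * (1 - (\<Sum>i\<in>C. pvar i)))"
    if cop: "strictly_A_copositive A c" for c
  proof -
    define f where "f = cox_poly A r F c"
    define s where "s C = 1 - (\<Sum>i\<in>C. pvar i)" for C
    define q where "q = (\<Sum>C\<in>PC. s C * s C)"
    define B where "B = {x :: nat \<Rightarrow> real. \<forall>i. 0 \<le> x i \<and> x i \<le> 1}"
    have evs: "ev x (s C) = 1 - (\<Sum>i\<in>C. x i)" for x C
      by (simp add: s_def ev_diff ev_sum)
    have evq: "ev x q = (\<Sum>C\<in>PC. (1 - (\<Sum>i\<in>C. x i)) * (1 - (\<Sum>i\<in>C. x i)))" for x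
      by (simp add: q_def ev_sum ev_mult evs)
    have q0: "ev x q \<ge> 0" for x unfolding evq by (intro sum_nonneg) auto
    have qf: "ev x f > 0" if xB: "x \<in> B" and qx: "ev x q = 0" for x
    proof -
      have "\<forall>C\<in>PC. (1 - (\<Sum>i\<in>C. x i)) * (1 - (\<Sum>i\<in>C. x i)) = 0"
        using qx finPC unfolding evq by (subst sum_nonneg_eq_0_iff[symmetric]) auto
      then have xs: "(\<Sum>i\<in>C. x i) = 1" if "primitive_collection (convex hull (rvec ` A)) r F C" for C
        using that by (auto simp: PC_def P_def)
      obtain a0 where a0: "a0 \<in> A" "\<forall>i\<in>{1..r}. x i = 0 \<longrightarrow> Expo A F a0 i = 0"
        using vertex_exists[OF finA xs] by blast
      have x0: "0 \<le> x i" for i using xB by (auto simp: B_def)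
      show ?thesis unfolding f_def ev_cox by (rule cox_pos[OF finA cop x0 a0])
    qed
    have "\<exists>lam\<ge>0. \<exists>m>0. \<forall>x\<in>B. ev x f + lam * ev x q \<ge> m"
    proof (rule pos_combination)
      show "compact B" unfolding B_def by (rule compact_box)
      have "(\<lambda>_. 0) \<in> B" by (simp add: B_def)
      then show "B \<noteq> {}" by blast
    qed (auto intro: cont_ev q0 qf)
    then obtain lam m where lam: "lam \<ge> 0" "m > 0" and pos: "\<forall>x\<in>B. ev x f + lam * ev x q \<ge> m"
      by blast
    define p where "p = f + cst lam * q"
    have ipr_s: "in_poly_ring r (s C)" if "C \<in> PC" for C
      unfolding s_def by (rule TS.ipr_sC[OF ts that])
    have ipr_q: "in_poly_ring r q" unfolding q_def by (intro ipr_sum ipr_mult ipr_s)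
    have ipr_p: "in_poly_ring r p" unfolding p_def f_def by (intro ipr_add ipr_mult ipr_cox ipr_cst ipr_q)
    have "p \<in> Tset r PC"
    proof (rule TS.bern_T[OF ts om ipr_p lam(2)])
      fix x :: "nat \<Rightarrow> real" assume "\<And>i. 0 \<le> x i \<and> x i \<le> 1"
      then have "x \<in> B" by (simp add: B_def)
      then show "m \<le> ev x p" using pos by (simp add: p_def ev_add ev_mult)
    qed
    then obtain g h where p: "p = g + (\<Sum>C\<in>PC. h C * s C)"
      and H: "in_poly_ring r g" "nonneg_coeffs g" "\<forall>C. in_poly_ring r (h C)"
      unfolding Tset_def s_def by blast
    have "f = p - cst lam * q" by (simp add: p_def)
    also have "\<dots> = g + (\<Sum>C\<in>PC. h C * s C) - (\<Sum>C\<in>PC. cst lam * s C * s C)"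
      by (simp add: p q_def sum_distrib_left mult.assoc)
    also have "\<dots> = g + (\<Sum>C\<in>PC. (h C - cst lam * s C) * s C)"
      by (simp add: sum_subtractf left_diff_distrib)
    finally have feq: "f = g + (\<Sum>C\<in>PC. (h C - cst lam * s C) * s C)" .
    show ?thesis
    proof (intro exI conjI)
      show "in_poly_ring r g" "nonneg_coeffs g" by (fact H(1), fact H(2))
      show "\<forall>C\<in>PC. in_poly_ring r (h C - cst lam * s C)"
        using H(3) ipr_s by (auto intro!: ipr_diff ipr_mult ipr_cst)
      show "cox_poly A r F c = g + (\<Sum>C\<in>PC. (h C - cst lam * s C) * (1 - (\<Sum>i\<in>C. pvar i)))"
        using feq by (simp add: f_def s_def)
    qed
  qed
  show ?thesis using part1 part2 part3 by blast
qed

end
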